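(* Let $K$ be a number field with ring of integers $\mathcal O_K$. Then the ring $\mathrm{Int}(\mathcal O_K)=\{f\in K[x]: f(\mathcal O_K)\subseteq\mathcal O_K\}$ has no prime element.
   Context: A prime element of a domain is a non-zero non-unit $p$ such that $p\mid ab$ implies $p\mid a$ or $p\mid b$. *)

theory Defs
  imports Complex_Main "HOL-Computational_Algebra.Polynomial"
begin

(* Number fields are modelled as subfields of the complex numbers that are
   finite-dimensional as vector spaces over the rationals. *)
definition is_subfield :: "complex set \<Rightarrow> bool" where
  "is_subfield K \<longleftrightarrow> 0 \<in> K \<and> 1 \<in> K \<and>
     (\<forall>x\<in>K. \<forall>y\<in>K. x + y \<in> K \<and> x - y \<in> K \<and> x * y \<in> K) \<and>
     (\<forall>x\<in>K. x \<noteq> 0 \<longrightarrow> inverse x \<in> K)"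

definition finite_dim_over_rat :: "complex set \<Rightarrow> bool" where
  "finite_dim_over_rat K \<longleftrightarrow>
     (\<exists>B. finite B \<and> B \<subseteq> K \<and>
        (\<forall>x\<in>K. \<exists>c :: complex \<Rightarrow> rat. x = (\<Sum>b\<in>B. of_rat (c b) * b)))"

definition number_field :: "complex set \<Rightarrow> bool" where
  "number_field K \<longleftrightarrow> is_subfield K \<and> finite_dim_over_rat K"

definition ring_of_integers :: "complex set \<Rightarrow> complex set" where
  "ring_of_integers K = {x \<in> K. algebraic_int x}"

definition int_valued_polys :: "complex set \<Rightarrow> complex poly set" where
  "int_valued_polys K = {f. (\<forall>i. coeff f i \<in> K) \<and>
       (\<forall>x \<in> ring_of_integers K. poly f x \<in> ring_of_integers K)}"

definition prime_elem_in :: "'a :: comm_ring_1 set \<Rightarrow> 'a \<Rightarrow> bool" where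
  "prime_elem_in R p \<longleftrightarrow> p \<in> R \<and> p \<noteq> 0 \<and> \<not> (\<exists>q\<in>R. p * q = 1) \<and>
     (\<forall>a\<in>R. \<forall>b\<in>R. (\<exists>c\<in>R. a * b = p * c) \<longrightarrow>
        (\<exists>c\<in>R. a = p * c) \<or> (\<exists>c\<in>R. b = p * c))"

end

theory Submission
  imports Defs "Jordan_Normal_Form.Char_Poly" "HOL-Computational_Algebra.Polynomial"
begin


definition zspan :: "complex set \<Rightarrow> complex set" where
  "zspan S = {(\<Sum>s\<in>S. of_int (c s) * s) | c. True}"

lemma zspan_I: "a = (\<Sum>s\<in>S. of_int (c s) * s) \<Longrightarrow> a \<in> zspan S"
  unfolding zspan_def by blast

lemma zspan_0: "0 \<in> zspan S"
  unfolding zspan_def by (rule CollectI, rule exI[of _ "\<lambda>_. 0"]) simp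

lemma zspan_base: assumes "finite S" "s \<in> S" shows "s \<in> zspan S"
proof -
  have e: "(\<lambda>t. of_int (if t = s then 1 else 0) * t) = (\<lambda>t. if t = s then t else (0::complex))"
    by auto
  have "(\<Sum>t\<in>S. of_int (if t = s then 1 else 0) * t) = s"
    unfolding e using assms by (simp add: sum.delta)
  thus ?thesis by (rule zspan_I[OF sym])
qed

lemma zspan_add: assumes "a \<in> zspan S" "b \<in> zspan S" shows "a + b \<in> zspan S"
proof -
  obtain c d where "a = (\<Sum>s\<in>S. of_int (c s) * s)" "b = (\<Sum>s\<in>S. of_int (d s) * s)"
    using assms unfolding zspan_def by blast
  hence "a + b = (\<Sum>s\<in>S. of_int (c s + d s) * s)"
    by (simp add: sum.distrib distrib_right)
  thus ?thesis by (rule zspan_I)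
qed

lemma zspan_smult: assumes "a \<in> zspan S" shows "of_int k * a \<in> zspan S"
proof -
  obtain c where "a = (\<Sum>s\<in>S. of_int (c s) * s)"
    using assms unfolding zspan_def by blast
  hence "of_int k * a = (\<Sum>s\<in>S. of_int (k * c s) * s)"
    by (simp add: sum_distrib_left mult.assoc)
  thus ?thesis by (rule zspan_I)
qed

lemma zspan_sum: assumes "\<And>i. i \<in> I \<Longrightarrow> a i \<in> zspan S"
  shows "(\<Sum>i\<in>I. of_int (k i) * a i) \<in> zspan S"
  using assms
proof (induction I rule: infinite_finite_induct)
  case (infinite A) then show ?case by (simp add: zspan_0)
next
  case empty then show ?case by (simp add: zspan_0)
next
  case (insert x F)
  then show ?case by (simp add: zspan_add zspan_smult)
qed

lemma zspan_mult_closed: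
  assumes "\<And>s. s \<in> S \<Longrightarrow> w * s \<in> zspan S" "a \<in> zspan S"
  shows "w * a \<in> zspan S"
proof -
  obtain c where "a = (\<Sum>s\<in>S. of_int (c s) * s)"
    using assms unfolding zspan_def by blast
  hence "w * a = (\<Sum>s\<in>S. of_int (c s) * (w * s))"
    by (simp add: sum_distrib_left mult.left_commute)
  thus ?thesis using zspan_sum[of S "\<lambda>s. w * s" S c] assms(1) by simp
qed

lemma algebraic_int_zspan:
  assumes fin: "finite S" and nz: "s0 \<in> S" "s0 \<noteq> 0"
    and cl: "\<And>s. s \<in> S \<Longrightarrow> z * s \<in> zspan S"
  shows "algebraic_int z"
proof -
  obtain xs where xs: "distinct xs" "set xs = S" using finite_distinct_list[OF fin] by blast
  define N where "N = length xs"
  have "\<forall>s\<in>S. \<exists>c. z * s = (\<Sum>t\<in>S. of_int (c t) * t)"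
    using cl unfolding zspan_def by blast
  then obtain cf where cf: "\<And>s. s \<in> S \<Longrightarrow> z * s = (\<Sum>t\<in>S. of_int (cf s t) * t)"
    by metis
  define Ai :: "int mat" where "Ai = mat N N (\<lambda>(i,j). cf (xs!i) (xs!j))"
  define A :: "complex mat" where "A = map_mat of_int Ai"
  define v :: "complex vec" where "v = vec N (\<lambda>i. xs!i)"
  have Ai: "Ai \<in> carrier_mat N N" unfolding Ai_def by simp
  have A: "A \<in> carrier_mat N N" unfolding A_def using Ai by simp
  have bij: "bij_betw (nth xs) {..<N} S" using bij_betw_nth[OF xs(1) _ xs(2)[symmetric]] N_def by simp
  have Av: "A *\<^sub>v v = z \<cdot>\<^sub>v v"
  proof (rule eq_vecI)
    fix i assume "i < dim_vec (z \<cdot>\<^sub>v v)"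
    hence i: "i < N" unfolding v_def by simp
    have "(A *\<^sub>v v) $ i = (\<Sum>j<N. of_int (cf (xs!i) (xs!j)) * xs!j)"
      using i A unfolding A_def Ai_def v_def
      by (simp add: scalar_prod_def atLeast0LessThan)
    also have "\<dots> = (\<Sum>t\<in>S. of_int (cf (xs!i) t) * t)"
      using sum.reindex_bij_betw[OF bij, of "\<lambda>t. of_int (cf (xs!i) t) * t"] by simp
    also have "\<dots> = z * xs!i" using cf[of "xs!i"] i xs(2) N_def by auto
    finally show "(A *\<^sub>v v) $ i = (z \<cdot>\<^sub>v v) $ i" using i unfolding v_def by simp
  qed (insert A, auto simp: v_def)
  obtain i0 where i0: "i0 < N" "xs!i0 = s0" using nz(1) xs(2) N_def by (metis in_set_conv_nth)
  have "v \<noteq> 0\<^sub>v N"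
  proof
    assume "v = 0\<^sub>v N"
    hence "v $ i0 = 0" using i0 by simp
    thus False using i0 nz(2) unfolding v_def by simp
  qed
  hence "eigenvector A v z" using Av A unfolding eigenvector_def v_def by auto
  hence "eigenvalue A z" unfolding eigenvalue_def by blast
  hence "poly (char_poly A) z = 0" using eigenvalue_root_char_poly[OF A] by simp
  moreover have "char_poly A = of_int_poly (char_poly Ai)"
    unfolding A_def using of_int_hom.char_poly_hom[OF Ai] .
  moreover have "lead_coeff (char_poly Ai) = 1" using degree_monic_char_poly[OF Ai] by simp
  ultimately show ?thesis unfolding algebraic_int_altdef_ipoly by auto
qed

lemma monic_top_power:
  fixes x :: complex
  assumes "lead_coeff P = 1" "poly (of_int_poly P) x = 0"
  shows "x ^ degree P = (\<Sum>l<degree P. of_int (- coeff P l) * x ^ l)"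
proof -
  have "0 = (\<Sum>l\<le>degree P. of_int (coeff P l) * x ^ l)"
    using assms(2) by (simp add: poly_altdef degree_map_poly)
  also have "\<dots> = x ^ degree P + (\<Sum>l<degree P. of_int (coeff P l) * x ^ l)"
    using assms(1) by (simp add: lessThan_Suc_atMost[symmetric])
  finally show ?thesis by (simp add: sum_negf eq_neg_iff_add_eq_0 add.commute)
qed

lemma algebraic_int_plus_times:
  fixes x y :: complex
  assumes "algebraic_int x" "algebraic_int y"
  shows "algebraic_int (x + y) \<and> algebraic_int (x * y)"
proof -
  obtain P where P: "poly (of_int_poly P) x = 0" "lead_coeff P = 1"
    using assms(1) unfolding algebraic_int_altdef_ipoly by blast
  obtain Q where Q: "poly (of_int_poly Q) y = 0" "lead_coeff Q = 1"
    using assms(2) unfolding algebraic_int_altdef_ipoly by blast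
  define m where "m = degree P"
  define k where "k = degree Q"
  have m: "m > 0"
  proof (rule ccontr)
    assume "\<not> m > 0" hence "degree P = 0" unfolding m_def by simp
    hence "poly (of_int_poly P) x = of_int (coeff P 0)" by (simp add: poly_altdef degree_map_poly)
    thus False using P \<open>degree P = 0\<close> by simp
  qed
  have k: "k > 0"
  proof (rule ccontr)
    assume "\<not> k > 0" hence "degree Q = 0" unfolding k_def by simp
    hence "poly (of_int_poly Q) y = of_int (coeff Q 0)" by (simp add: poly_altdef degree_map_poly)
    thus False using Q \<open>degree Q = 0\<close> by simp
  qed
  define S where "S = (\<lambda>(i,j). x^i * y^j) ` ({..<m} \<times> {..<k})"
  have fin: "finite S" unfolding S_def by simp
  have one: "1 \<in> S" unfolding S_def using m k by (auto intro!: image_eqI[of _ _ "(0,0)"])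
  have xm: "x ^ m = (\<Sum>l<m. of_int (- coeff P l) * x ^ l)" using monic_top_power[OF P(2,1)] m_def by simp
  have yk: "y ^ k = (\<Sum>l<k. of_int (- coeff Q l) * y ^ l)" using monic_top_power[OF Q(2,1)] k_def by simp
  have xS: "x * s \<in> zspan S" if "s \<in> S" for s
  proof -
    obtain i j where ij: "i < m" "j < k" "s = x^i * y^j" using \<open>s \<in> S\<close> unfolding S_def by auto
    show ?thesis
    proof (cases "Suc i < m")
      case True
      hence "x * s \<in> S" unfolding S_def using ij by (auto intro!: image_eqI[of _ _ "(Suc i, j)"])
      thus ?thesis using zspan_base fin by blast
    next
      case False
      hence "Suc i = m" using ij by simp
      have "x * s = x ^ Suc i * y ^ j" using ij by (simp add: mult.assoc)
      hence "x * s = x ^ m * y ^ j" using \<open>Suc i = m\<close> by simp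
      also have "\<dots> = (\<Sum>l<m. of_int (- coeff P l) * (x ^ l * y ^ j))"
        unfolding xm by (simp add: sum_distrib_right mult.assoc)
      also have "\<dots> \<in> zspan S"
        by (rule zspan_sum, rule zspan_base[OF fin], unfold S_def, use ij in auto)
      finally show ?thesis .
    qed
  qed
  have yS: "y * s \<in> zspan S" if "s \<in> S" for s
  proof -
    obtain i j where ij: "i < m" "j < k" "s = x^i * y^j" using \<open>s \<in> S\<close> unfolding S_def by auto
    show ?thesis
    proof (cases "Suc j < k")
      case True
      hence "y * s \<in> S" unfolding S_def using ij by (auto simp: mult_ac intro!: image_eqI[of _ _ "(i, Suc j)"])
      thus ?thesis using zspan_base fin by blast
    next
      case False
      hence "Suc j = k" using ij by simp
      have "y * s = x ^ i * y ^ Suc j" using ij by (simp add: mult_ac)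
      hence "y * s = x ^ i * y ^ k" using \<open>Suc j = k\<close> by simp
      also have "\<dots> = (\<Sum>l<k. of_int (- coeff Q l) * (x ^ i * y ^ l))"
        unfolding yk by (simp add: sum_distrib_left mult_ac)
      also have "\<dots> \<in> zspan S"
        by (rule zspan_sum, rule zspan_base[OF fin], unfold S_def, use ij in auto)
      finally show ?thesis .
    qed
  qed
  have "algebraic_int (x + y)"
  proof (rule algebraic_int_zspan[OF fin one])
    fix s assume "s \<in> S"
    have "(x + y) * s = of_int 1 * (x * s) + of_int 1 * (y * s)" by (simp add: distrib_right)
    thus "(x + y) * s \<in> zspan S" using xS yS \<open>s \<in> S\<close> zspan_add zspan_smult by metis
  qed simp
  moreover have "algebraic_int (x * y)"
  proof (rule algebraic_int_zspan[OF fin one])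
    fix s assume "s \<in> S"
    have "(x * y) * s = x * (y * s)" by simp
    thus "(x * y) * s \<in> zspan S" using zspan_mult_closed[OF xS yS[OF \<open>s \<in> S\<close>]] by (simp add: mult.assoc)
  qed simp
  ultimately show ?thesis ..
qed

lemma algebraic_int_add: "algebraic_int (x::complex) \<Longrightarrow> algebraic_int y \<Longrightarrow> algebraic_int (x + y)"
  using algebraic_int_plus_times by blast
lemma algebraic_int_mult: "algebraic_int (x::complex) \<Longrightarrow> algebraic_int y \<Longrightarrow> algebraic_int (x * y)"
  using algebraic_int_plus_times by blast
lemma algebraic_int_diff: "algebraic_int (x::complex) \<Longrightarrow> algebraic_int y \<Longrightarrow> algebraic_int (x - y)"
  using algebraic_int_add[of x "-y"] by auto
lemma algebraic_int_of_int [simp, intro]: "algebraic_int (of_int k :: complex)"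
  by (rule int_imp_algebraic_int) simp
lemma algebraic_int_1 [simp, intro]: "algebraic_int (1 :: complex)"
  using algebraic_int_of_int[of 1] by simp
lemma algebraic_int_power: "algebraic_int (x::complex) \<Longrightarrow> algebraic_int (x ^ k)"
  by (induction k) (auto intro: algebraic_int_mult)
lemma algebraic_int_sum: "(\<And>i. i \<in> I \<Longrightarrow> algebraic_int (f i :: complex)) \<Longrightarrow> algebraic_int (sum f I)"
  by (induction I rule: infinite_finite_induct) (auto intro: algebraic_int_add)
lemma algebraic_int_prod: "(\<And>i. i \<in> I \<Longrightarrow> algebraic_int (f i :: complex)) \<Longrightarrow> algebraic_int (prod f I)"
  by (induction I rule: infinite_finite_induct) (auto intro: algebraic_int_mult)


interpretation Qv: vector_space "\<lambda>(r::rat) (z::complex). of_rat r * z"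
  by unfold_locales (simp_all add: algebra_simps of_rat_add of_rat_mult)

locale nfield =
  fixes K :: "complex set"
  assumes nf: "number_field K"
begin

lemma K0: "0 \<in> K" and K1: "1 \<in> K"
  and Kadd: "x \<in> K \<Longrightarrow> y \<in> K \<Longrightarrow> x + y \<in> K"
  and Kdiff: "x \<in> K \<Longrightarrow> y \<in> K \<Longrightarrow> x - y \<in> K"
  and Kmult: "x \<in> K \<Longrightarrow> y \<in> K \<Longrightarrow> x * y \<in> K"
  and Kinv: "x \<in> K \<Longrightarrow> inverse x \<in> K"
  using nf unfolding number_field_def is_subfield_def by auto

lemma Kuminus: "x \<in> K \<Longrightarrow> - x \<in> K"
  using Kdiff[OF K0] by simp

lemma Kdiv: "x \<in> K \<Longrightarrow> y \<in> K \<Longrightarrow> x / y \<in> K"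
  using Kmult Kinv by (simp add: divide_inverse)

lemma Kpower: "x \<in> K \<Longrightarrow> x ^ k \<in> K"
  by (induction k) (auto intro: Kmult K1)

lemma Ksum: "(\<And>i. i \<in> I \<Longrightarrow> f i \<in> K) \<Longrightarrow> sum f I \<in> K"
  by (induction I rule: infinite_finite_induct) (auto intro: Kadd K0)

lemma Kof_nat: "of_nat k \<in> K"
  by (induction k) (auto intro: Kadd K0 K1)

lemma Kof_int: "of_int k \<in> K"
proof (cases "k \<ge> 0")
  case True thus ?thesis using Kof_nat[of "nat k"] by simp
next
  case False thus ?thesis using Kuminus[OF Kof_nat[of "nat (-k)"]] by simp
qed

lemma Kof_rat: "of_rat r \<in> K"
proof -
  obtain a b where "r = of_int a / of_int b" by (metis Fract_of_int_quotient Rat_cases)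
  hence "of_rat r = (of_int a / of_int b :: complex)" by (simp add: of_rat_divide)
  thus ?thesis using Kdiv Kof_int by simp
qed

lemma Kpoly: "(\<forall>i. coeff f i \<in> K) \<Longrightarrow> x \<in> K \<Longrightarrow> poly f x \<in> K"
  by (simp add: poly_altdef Ksum Kmult Kpower)

abbreviation "OK \<equiv> ring_of_integers K"

lemma OK_iff: "x \<in> OK \<longleftrightarrow> x \<in> K \<and> algebraic_int x"
  unfolding ring_of_integers_def by simp

lemma OK_K: "x \<in> OK \<Longrightarrow> x \<in> K" by (simp add: OK_iff)
lemma OK_add: "x \<in> OK \<Longrightarrow> y \<in> OK \<Longrightarrow> x + y \<in> OK"
  by (simp add: OK_iff Kadd algebraic_int_add)
lemma OK_diff: "x \<in> OK \<Longrightarrow> y \<in> OK \<Longrightarrow> x - y \<in> OK"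
  by (simp add: OK_iff Kdiff algebraic_int_diff)
lemma OK_mult: "x \<in> OK \<Longrightarrow> y \<in> OK \<Longrightarrow> x * y \<in> OK"
  by (simp add: OK_iff Kmult algebraic_int_mult)
lemma OK_uminus: "x \<in> OK \<Longrightarrow> - x \<in> OK"
  by (simp add: OK_iff Kuminus)
lemma OK_of_int: "of_int k \<in> OK"
  by (simp add: OK_iff Kof_int)
lemma OK_0: "0 \<in> OK" using OK_of_int[of 0] by simp
lemma OK_1: "1 \<in> OK" using OK_of_int[of 1] by simp
lemma OK_power: "x \<in> OK \<Longrightarrow> x ^ k \<in> OK"
  by (simp add: OK_iff Kpower algebraic_int_power)
lemma OK_sum: "(\<And>i. i \<in> I \<Longrightarrow> f i \<in> OK) \<Longrightarrow> sum f I \<in> OK"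
  by (simp add: OK_iff Ksum algebraic_int_sum)
lemma OK_int_poly: "x \<in> OK \<Longrightarrow> poly (of_int_poly P) x \<in> OK"
  by (simp add: poly_altdef degree_map_poly OK_sum OK_mult OK_of_int OK_power)

lemma half_not_OK: "1 / 2 \<notin> OK"
proof
  assume "1 / 2 \<in> OK"
  hence "algebraic_int (1/2 :: complex)" by (simp add: OK_iff)
  moreover have "(1/2 :: complex) \<in> \<rat>" by simp
  ultimately have "(1/2 :: complex) \<in> \<int>" using rational_algebraic_int_is_int by blast
  then obtain k where "(1/2 :: complex) = of_int k" by (auto elim: Ints_cases)
  hence "(1::complex) = of_int (2 * k)" by (simp add: field_simps)
  hence "(1::int) = 2 * k" using of_int_eq_iff by fastforce
  thus False by presburger
qed


lemma basis_ex: "\<exists>B. B \<subseteq> K \<and> finite B \<and> Qv.independent B \<and> K \<subseteq> Qv.span B"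
proof -
  obtain B0 where B0: "finite B0" "B0 \<subseteq> K"
    "\<forall>x\<in>K. \<exists>c::complex\<Rightarrow>rat. x = (\<Sum>b\<in>B0. of_rat (c b) * b)"
    using nf unfolding number_field_def finite_dim_over_rat_def by blast
  have KB0: "K \<subseteq> Qv.span B0"
  proof
    fix x assume "x \<in> K"
    then obtain c where x: "x = (\<Sum>b\<in>B0. of_rat (c b) * b)" using B0 by blast
    show "x \<in> Qv.span B0" unfolding x
      by (intro Qv.span_sum) (metis Qv.span_base Qv.span_scale)
  qed
  obtain B where B: "B \<subseteq> B0" "Qv.independent B" "B0 \<subseteq> Qv.span B" by (rule Qv.basis_exists)
  have "Qv.span B0 \<subseteq> Qv.span B"
    using Qv.span_mono[OF B(3)] Qv.span_span by simp
  hence "K \<subseteq> Qv.span B" using KB0 by blast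
  moreover have "finite B" using B(1) B0(1) finite_subset by blast
  ultimately show ?thesis using B B0 by blast
qed

definition Bs where "Bs = (SOME B. B \<subseteq> K \<and> finite B \<and> Qv.independent B \<and> K \<subseteq> Qv.span B)"

lemma Bs: "Bs \<subseteq> K" "finite Bs" "Qv.independent Bs" "K \<subseteq> Qv.span Bs"
  using someI_ex[OF basis_ex] unfolding Bs_def by blast+

definition bs where "bs = (SOME xs. set xs = Bs \<and> distinct xs)"

lemma bs: "distinct bs" "set bs = Bs"
  using someI_ex[OF finite_distinct_list[OF Bs(2)]] unfolding bs_def by blast+

definition dK where "dK = length bs"

lemma bs_bij: "bij_betw (nth bs) {..<dK} Bs"
  using bij_betw_nth[OF bs(1) _ bs(2)[symmetric]] dK_def by simp

lemma bs_in: "i < dK \<Longrightarrow> bs ! i \<in> Bs"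
  unfolding dK_def using bs(2) nth_mem[of i bs] by simp

lemma bs_K: "i < dK \<Longrightarrow> bs ! i \<in> K"
  using Bs(1) bs_in by blast

lemma bs_nz: "i < dK \<Longrightarrow> bs ! i \<noteq> 0"
proof
  assume "i < dK" "bs ! i = 0"
  hence "0 \<in> Bs" using bs_in by metis
  thus False using Bs(3) Qv.dependent_zero by blast
qed

lemma dK_pos: "dK > 0"
proof (rule ccontr)
  assume "\<not> dK > 0"
  hence "bs = []" unfolding dK_def by simp
  hence Bs0: "Bs = {}" using bs(2) by auto
  have "(1::complex) \<in> Qv.span Bs" using Bs(4) K1 by (rule subsetD)
  hence "(1::complex) \<in> Qv.span {}" unfolding Bs0 .
  thus False unfolding Qv.span_empty by simp
qed

definition coord where "coord i y = Qv.representation Bs y (bs ! i)"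

lemma coord_expand: assumes "y \<in> K" shows "y = (\<Sum>i<dK. of_rat (coord i y) * bs ! i)"
proof -
  have "(\<Sum>b\<in>Bs. of_rat (Qv.representation Bs y b) * b) = y"
    using Qv.sum_representation_eq[OF Bs(3) _ Bs(2)] assms Bs(4) by blast
  also have "(\<Sum>b\<in>Bs. of_rat (Qv.representation Bs y b) * b) = (\<Sum>i<dK. of_rat (coord i y) * bs ! i)"
    unfolding coord_def using sum.reindex_bij_betw[OF bs_bij, of "\<lambda>b. of_rat (Qv.representation Bs y b) * b"]
    by simp
  finally show ?thesis by simp
qed

lemma coord_add: assumes "y \<in> K" "z \<in> K" shows "coord i (y + z) = coord i y + coord i z"
proof -
  have "y \<in> Qv.span Bs" "z \<in> Qv.span Bs" using assms Bs(4) by auto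
  thus ?thesis unfolding coord_def Qv.representation_add[OF Bs(3) \<open>z \<in> Qv.span Bs\<close> \<open>y \<in> Qv.span Bs\<close>]
    by simp
qed

lemma coord_scale: assumes "y \<in> K" shows "coord i (of_rat r * y) = r * coord i y"
proof -
  have "y \<in> Qv.span Bs" using assms Bs(4) by auto
  thus ?thesis unfolding coord_def Qv.representation_scale[OF Bs(3) \<open>y \<in> Qv.span Bs\<close>]
    by simp
qed

lemma coord_sum: assumes "\<And>j. j \<in> J \<Longrightarrow> f j \<in> K" shows "coord i (sum f J) = (\<Sum>j\<in>J. coord i (f j))"
proof -
  have "\<And>j. j \<in> J \<Longrightarrow> f j \<in> Qv.span Bs" using assms Bs(4) by auto
  hence "Qv.representation Bs (sum f J) = (\<lambda>b. \<Sum>j\<in>J. Qv.representation Bs (f j) b)"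
    by (rule Qv.representation_sum[OF Bs(3)])
  thus ?thesis unfolding coord_def by simp
qed

lemma coord_basis: assumes "i < dK" "j < dK" shows "coord i (bs ! j) = (if i = j then 1 else 0)"
proof -
  have "bs ! j \<in> Bs" using assms bs_in by simp
  hence "Qv.representation Bs (bs ! j) = (\<lambda>v. if v = bs ! j then 1 else 0)"
    using Qv.representation_basis[OF Bs(3)] by blast
  thus ?thesis unfolding coord_def using nth_eq_iff_index_eq[OF bs(1)] assms dK_def by auto
qed

lemma coord_0: "coord i 0 = 0"
  unfolding coord_def by (simp add: Qv.representation_zero)

definition Amat where "Amat y = mat dK dK (\<lambda>(j,i). coord i (y * bs ! j))"

lemma Amat_carrier[simp]: "Amat y \<in> carrier_mat dK dK"
  unfolding Amat_def by simp

lemma Amat_dim[simp]: "dim_row (Amat y) = dK" "dim_col (Amat y) = dK"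
  unfolding Amat_def by simp_all

lemma Amat_index: "j < dK \<Longrightarrow> i < dK \<Longrightarrow> Amat y $$ (j, i) = coord i (y * bs ! j)"
  unfolding Amat_def by simp

definition wv where "wv = vec dK (\<lambda>j. bs ! j)"

lemma wv_carrier: "wv \<in> carrier_vec dK" unfolding wv_def by simp

lemma wv_nz: "wv \<noteq> 0\<^sub>v dK"
proof
  assume a: "wv = 0\<^sub>v dK"
  have "bs ! 0 = wv $ 0" unfolding wv_def using dK_pos by simp
  also have "\<dots> = 0" unfolding a using dK_pos by simp
  finally show False using bs_nz[OF dK_pos] by contradiction
qed

lemma Amat_eigen: assumes "y \<in> K"
  shows "map_mat of_rat (Amat y) *\<^sub>v wv = y \<cdot>\<^sub>v wv"
proof (rule eq_vecI)
  fix j assume "j < dim_vec (y \<cdot>\<^sub>v wv)"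
  hence j: "j < dK" unfolding wv_def by simp
  define M where "M = map_mat (of_rat :: rat \<Rightarrow> complex) (Amat y)"
  have M: "M \<in> carrier_mat dK dK" unfolding M_def by simp
  have "(M *\<^sub>v wv) $ j = row M j \<bullet> wv" using j M by simp
  also have "\<dots> = (\<Sum>i\<in>{0..<dK}. row M j $ i * wv $ i)" by (simp add: scalar_prod_def wv_def)
  also have "\<dots> = (\<Sum>i\<in>{0..<dK}. of_rat (coord i (y * bs ! j)) * bs ! i)"
    by (intro sum.cong refl) (use j M in \<open>simp add: wv_def M_def Amat_index\<close>)
  finally have "(map_mat of_rat (Amat y) *\<^sub>v wv) $ j = (\<Sum>i<dK. of_rat (coord i (y * bs ! j)) * bs ! i)"
    unfolding M_def atLeast0LessThan .
  also have "\<dots> = y * bs ! j" using coord_expand[OF Kmult[OF assms bs_K[OF j]]] by (rule sym)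
  finally have e: "(map_mat of_rat (Amat y) *\<^sub>v wv) $ j = y * bs ! j" .
  have f: "(y \<cdot>\<^sub>v wv) $ j = y * bs ! j" using j unfolding wv_def by simp
  show "(map_mat of_rat (Amat y) *\<^sub>v wv) $ j = (y \<cdot>\<^sub>v wv) $ j" using trans[OF e sym[OF f]] .
qed (simp add: wv_def Amat_def)

lemma Amat_mult: assumes "y \<in> K" "z \<in> K" shows "Amat y * Amat z = Amat (y * z)"
proof (rule eq_matI)
  fix j i assume ji: "j < dim_row (Amat (y * z))" "i < dim_col (Amat (y * z))"
  hence j: "j < dK" and i: "i < dK" by auto
  have yb: "y * bs ! j \<in> K" using Kmult[OF assms(1) bs_K[OF j]] .
  have "(Amat y * Amat z) $$ (j, i) = row (Amat y) j \<bullet> col (Amat z) i" using i j by simp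
  also have "\<dots> = (\<Sum>k\<in>{0..<dK}. row (Amat y) j $ k * col (Amat z) i $ k)"
    by (simp add: scalar_prod_def)
  also have "\<dots> = (\<Sum>k<dK. coord k (y * bs ! j) * coord i (z * bs ! k))"
    unfolding atLeast0LessThan by (intro sum.cong refl) (use i j in \<open>simp add: Amat_index\<close>)
  also have "\<dots> = (\<Sum>k<dK. coord i (of_rat (coord k (y * bs ! j)) * (z * bs ! k)))"
  proof (intro sum.cong refl)
    fix k assume "k \<in> {..<dK}"
    hence zk: "z * bs ! k \<in> K" using Kmult[OF assms(2) bs_K] by simp
    show "coord k (y * bs ! j) * coord i (z * bs ! k) = coord i (of_rat (coord k (y * bs ! j)) * (z * bs ! k))"
      using coord_scale[OF zk] by simp
  qed
  also have "\<dots> = coord i (\<Sum>k<dK. of_rat (coord k (y * bs ! j)) * (z * bs ! k))"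
  proof (rule coord_sum[symmetric])
    fix k assume "k \<in> {..<dK}"
    hence zk: "z * bs ! k \<in> K" using Kmult[OF assms(2) bs_K] by simp
    show "of_rat (coord k (y * bs ! j)) * (z * bs ! k) \<in> K" using Kmult[OF Kof_rat zk] .
  qed
  finally have c1: "(Amat y * Amat z) $$ (j, i) = coord i (\<Sum>k<dK. of_rat (coord k (y * bs ! j)) * (z * bs ! k))" .
  have c2: "(\<Sum>k<dK. of_rat (coord k (y * bs ! j)) * (z * bs ! k)) = (y * z) * bs ! j"
  proof -
    have "(\<Sum>k<dK. of_rat (coord k (y * bs ! j)) * (z * bs ! k)) = z * (\<Sum>k<dK. of_rat (coord k (y * bs ! j)) * bs ! k)"
      by (simp add: sum_distrib_left mult_ac)
    also have "\<dots> = z * (y * bs ! j)" using coord_expand[OF yb] by (rule arg_cong[OF sym])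
    also have "\<dots> = (y * z) * bs ! j" by (simp add: mult_ac)
    finally show ?thesis .
  qed
  have c3: "coord i ((y * z) * bs ! j) = Amat (y * z) $$ (j, i)" using i j by (simp add: Amat_index)
  show "(Amat y * Amat z) $$ (j, i) = Amat (y * z) $$ (j, i)" unfolding c1 c2 c3 ..
qed auto

lemma Amat_one: "Amat 1 = 1\<^sub>m dK"
  by (rule eq_matI) (auto simp: Amat_def coord_basis)

lemma Amat_scale: assumes "y \<in> K" shows "Amat (of_rat r * y) = r \<cdot>\<^sub>m Amat y"
proof (rule eq_matI)
  fix i j assume "i < dim_row (r \<cdot>\<^sub>m Amat y)" "j < dim_col (r \<cdot>\<^sub>m Amat y)"
  hence ij: "i < dK" "j < dK" by auto
  have "Amat (of_rat r * y) $$ (i, j) = coord j (of_rat r * y * bs ! i)" using ij by (simp add: Amat_index)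
  also have "\<dots> = coord j (of_rat r * (y * bs ! i))" by (simp add: mult.assoc)
  also have "\<dots> = r * coord j (y * bs ! i)" by (rule coord_scale[OF Kmult[OF assms bs_K[OF ij(1)]]])
  also have "\<dots> = (r \<cdot>\<^sub>m Amat y) $$ (i, j)" using ij by (simp add: Amat_index)
  finally show "Amat (of_rat r * y) $$ (i, j) = (r \<cdot>\<^sub>m Amat y) $$ (i, j)" .
qed auto

definition Nm where "Nm y = det (Amat y)"

lemma Nm_mult: "y \<in> K \<Longrightarrow> z \<in> K \<Longrightarrow> Nm (y * z) = Nm y * Nm z"
  unfolding Nm_def using Amat_mult det_mult[OF Amat_carrier Amat_carrier] by metis

lemma Nm_one: "Nm 1 = 1"
  unfolding Nm_def Amat_one by simp

lemma Nm_scale: "y \<in> K \<Longrightarrow> Nm (of_rat r * y) = r ^ dK * Nm y"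
  unfolding Nm_def by (simp add: Amat_scale)

lemma Nm_nz: assumes "y \<in> K" "y \<noteq> 0" shows "Nm y \<noteq> 0"
proof -
  have "Nm y * Nm (inverse y) = 1"
    using Nm_mult[OF assms(1) Kinv[OF assms(1)]] assms Nm_one by simp
  thus ?thesis by auto
qed

end


lemma alg_int_prod_coeffs:
  assumes "\<forall>a\<in>set as. algebraic_int (a::complex)"
  shows "algebraic_int (coeff (\<Prod>a\<leftarrow>as. [:-a, 1:]) k)"
  using assms
proof (induction as arbitrary: k)
  case Nil
  then show ?case by (cases k) auto
next
  case (Cons a as)
  have ha: "algebraic_int a" using Cons.prems by simp
  have "coeff (\<Prod>a\<leftarrow>a # as. [:-a, 1:]) k =
        - a * coeff (\<Prod>a\<leftarrow>as. [:-a, 1:]) k + (case k of 0 \<Rightarrow> 0 | Suc j \<Rightarrow> coeff (\<Prod>a\<leftarrow>as. [:-a, 1:]) j)"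
    by (simp add: coeff_pCons split: nat.split)
  moreover have "algebraic_int (case k of 0 \<Rightarrow> 0 | Suc j \<Rightarrow> coeff (\<Prod>a\<leftarrow>as. [:-a, 1:]) j)"
    using Cons by (cases k) auto
  ultimately show ?case using Cons ha
    by (metis algebraic_int_add algebraic_int_mult algebraic_int_minus list.set_intros(2))
qed

lemma rat_in_Ints: assumes "(of_rat r :: complex) \<in> \<int>" shows "r \<in> \<int>"
proof -
  obtain z where "(of_rat r :: complex) = of_int z" using assms by (auto elim: Ints_cases)
  hence "(of_rat r :: complex) = of_rat (of_int z)" by simp
  hence "r = of_int z" using of_rat_eq_iff by blast
  thus ?thesis by simp
qed

context nfield
begin

lemma Amat_pow: assumes "y \<in> K" shows "Amat (y ^ k) = Amat y ^\<^sub>m k"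
proof (induction k)
  case 0 then show ?case by (simp add: Amat_one)
next
  case (Suc k)
  have "Amat (y ^ Suc k) = Amat (y ^ k * y)" by (simp add: mult.commute)
  also have "\<dots> = Amat (y ^ k) * Amat y" using Amat_mult[OF Kpower[OF assms] assms] by simp
  finally show ?case using Suc by simp
qed

lemma coord_of_int: "w \<in> K \<Longrightarrow> coord i (of_int c * w) = of_int c * coord i w"
  using coord_scale[of w i "of_int c"] by simp

lemma coord_intpoly: assumes "y \<in> K" "j < dK"
  shows "coord i (poly (of_int_poly P) y * bs ! j) =
         (\<Sum>l\<le>degree P. of_int (coeff P l) * coord i (y ^ l * bs ! j))"
proof -
  have "poly (of_int_poly P) y * bs ! j = (\<Sum>l\<le>degree P. of_int (coeff P l) * (y ^ l * bs ! j))"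
    by (simp add: poly_altdef degree_map_poly sum_distrib_right mult.assoc)
  hence "coord i (poly (of_int_poly P) y * bs ! j) =
         (\<Sum>l\<le>degree P. coord i (of_int (coeff P l) * (y ^ l * bs ! j)))"
    by (simp add: coord_sum Kmult Kof_int Kpower assms bs_K)
  also have "\<dots> = (\<Sum>l\<le>degree P. of_int (coeff P l) * coord i (y ^ l * bs ! j))"
    by (intro sum.cong refl coord_of_int Kmult Kpower assms bs_K)
  finally show ?thesis .
qed

lemma eigen_root:
  assumes y: "y \<in> K" and P: "poly (of_int_poly P) y = 0"
    and ev: "eigenvalue (map_mat (of_rat :: rat \<Rightarrow> complex) (Amat y)) lam"
  shows "poly (of_int_poly P) lam = 0"
proof -
  obtain v where v: "eigenvector (map_mat of_rat (Amat y)) v lam" using ev unfolding eigenvalue_def by blast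
  have vc: "v \<in> carrier_vec dK" and vnz: "v \<noteq> 0\<^sub>v dK"
    using v unfolding eigenvector_def by auto
  obtain i0 where i0: "i0 < dK" "v $ i0 \<noteq> 0"
  proof -
    have "\<exists>i<dK. v $ i \<noteq> 0"
    proof (rule ccontr)
      assume "\<not> (\<exists>i<dK. v $ i \<noteq> 0)"
      hence "v = 0\<^sub>v dK" using vc by (intro eq_vecI) auto
      thus False using vnz by contradiction
    qed
    thus ?thesis using that by blast
  qed
  have Ac: "map_mat (of_rat :: rat \<Rightarrow> complex) (Amat y) \<in> carrier_mat dK dK" by simp
  have pw: "(\<Sum>i<dK. of_rat (coord i (y ^ l * bs ! i0)) * v $ i) = lam ^ l * v $ i0" for l
  proof -
    have "map_mat (of_rat :: rat \<Rightarrow> complex) (Amat (y ^ l)) = (map_mat of_rat (Amat y)) ^\<^sub>m l"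
      unfolding Amat_pow[OF y] by (rule of_rat_hom.mat_hom_pow[OF Amat_carrier])
    hence "map_mat (of_rat :: rat \<Rightarrow> complex) (Amat (y ^ l)) *\<^sub>v v = lam ^ l \<cdot>\<^sub>v v"
      using eigenvector_pow[OF Ac v] by simp
    hence "(map_mat (of_rat :: rat \<Rightarrow> complex) (Amat (y ^ l)) *\<^sub>v v) $ i0 = lam ^ l * v $ i0"
      using i0 vc by simp
    moreover have "(map_mat (of_rat :: rat \<Rightarrow> complex) (Amat (y ^ l)) *\<^sub>v v) $ i0 =
        (\<Sum>i\<in>{0..<dK}. of_rat (coord i (y ^ l * bs ! i0)) * v $ i)"
      using i0 vc by (simp add: scalar_prod_def Amat_index)
    ultimately show ?thesis by (simp add: atLeast0LessThan)
  qed
  have "poly (of_int_poly P) lam * v $ i0 = (\<Sum>l\<le>degree P. of_int (coeff P l) * (lam ^ l * v $ i0))"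
    by (simp add: poly_altdef degree_map_poly sum_distrib_right mult.assoc)
  also have "\<dots> = (\<Sum>l\<le>degree P. of_int (coeff P l) * (\<Sum>i<dK. of_rat (coord i (y ^ l * bs ! i0)) * v $ i))"
    unfolding pw ..
  also have "\<dots> = (\<Sum>i<dK. (\<Sum>l\<le>degree P. of_int (coeff P l) * of_rat (coord i (y ^ l * bs ! i0))) * v $ i)"
    by (simp add: sum_distrib_left sum_distrib_right mult_ac sum.swap[of _ "{..<dK}"])
  also have "\<dots> = (\<Sum>i<dK. of_rat (coord i (poly (of_int_poly P) y * bs ! i0)) * v $ i)"
    by (intro sum.cong refl) (simp add: coord_intpoly[OF y i0(1)] of_rat_sum of_rat_mult)
  also have "\<dots> = 0" using P by (simp add: coord_0)
  finally show ?thesis using i0(2) by simp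
qed

lemma charpoly_Ints:
  assumes "y \<in> OK"
  shows "coeff (char_poly (Amat y)) k \<in> \<int>"
proof -
  have y: "y \<in> K" using assms OK_K by blast
  obtain P where P: "poly (of_int_poly P) y = 0" "lead_coeff P = 1"
    using assms unfolding OK_iff algebraic_int_altdef_ipoly by blast
  have cp: "char_poly (map_mat (of_rat :: rat \<Rightarrow> complex) (Amat y)) = map_poly of_rat (char_poly (Amat y))"
    by (rule of_rat_hom.char_poly_hom[OF Amat_carrier[of y]])
  obtain as where as: "char_poly (map_mat (of_rat :: rat \<Rightarrow> complex) (Amat y)) = (\<Prod>a\<leftarrow>as. [:- a, 1:])"
    using char_poly_factorized[of "map_mat (of_rat :: rat \<Rightarrow> complex) (Amat y)" dK] by auto
  have "\<forall>a\<in>set as. algebraic_int a"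
  proof
    fix a assume a: "a \<in> set as"
    have "poly (\<Prod>a\<leftarrow>as. [:- a, 1:]) a = 0"
      using a by (simp add: poly_prod_list prod_list_zero_iff)
    hence "eigenvalue (map_mat of_rat (Amat y)) a"
      unfolding as[symmetric] by (simp add: eigenvalue_root_char_poly[of _ dK])
    hence "poly (of_int_poly P) a = 0" by (rule eigen_root[OF y P(1)])
    thus "algebraic_int a" unfolding algebraic_int_altdef_ipoly using P(2) by blast
  qed
  hence "algebraic_int (coeff (\<Prod>a\<leftarrow>as. [:- a, 1:]) k)" by (rule alg_int_prod_coeffs)
  hence "algebraic_int (of_rat (coeff (char_poly (Amat y)) k) :: complex)"
    using as cp by (metis coeff_map_poly of_rat_0)
  hence "(of_rat (coeff (char_poly (Amat y)) k) :: complex) \<in> \<int>"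
    by (intro rational_algebraic_int_is_int) auto
  thus ?thesis by (rule rat_in_Ints)
qed


definition chi where "chi y = map_poly (\<lambda>r. \<lfloor>r\<rfloor>) (char_poly (Amat y))"

lemma chi_rat: assumes "y \<in> OK" shows "map_poly (of_int :: int \<Rightarrow> rat) (chi y) = char_poly (Amat y)"
proof (rule poly_eqI)
  fix k
  have "coeff (char_poly (Amat y)) k \<in> \<int>" by (rule charpoly_Ints[OF assms])
  then obtain z where z: "coeff (char_poly (Amat y)) k = of_int z" by (auto elim: Ints_cases)
  show "coeff (map_poly of_int (chi y)) k = coeff (char_poly (Amat y)) k"
    unfolding chi_def by (simp add: coeff_map_poly z)
qed

lemma chi_monic: assumes "y \<in> OK" shows "lead_coeff (chi y) = 1" "degree (chi y) = dK"
proof -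
  have d: "degree (char_poly (Amat y)) = dK \<and> coeff (char_poly (Amat y)) dK = 1"
    by (rule degree_monic_char_poly[OF Amat_carrier])
  have "degree (map_poly (of_int :: int \<Rightarrow> rat) (chi y)) = degree (chi y)"
    by (rule of_int_hom.degree_map_poly_hom)
  thus dg: "degree (chi y) = dK" using d chi_rat[OF assms] by simp
  have "coeff (map_poly (of_int :: int \<Rightarrow> rat) (chi y)) dK = 1" using d chi_rat[OF assms] by simp
  hence "coeff (chi y) dK = 1" by (simp add: coeff_map_poly)
  thus "lead_coeff (chi y) = 1" using dg by simp
qed

lemma chi_complex: assumes "y \<in> OK"
  shows "map_poly (of_int :: int \<Rightarrow> complex) (chi y) = char_poly (map_mat (of_rat :: rat \<Rightarrow> complex) (Amat y))"
proof -
  have "char_poly (map_mat (of_rat :: rat \<Rightarrow> complex) (Amat y)) = map_poly of_rat (char_poly (Amat y))"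
    by (rule of_rat_hom.char_poly_hom[OF Amat_carrier[of y]])
  also have "\<dots> = map_poly of_rat (map_poly (of_int :: int \<Rightarrow> rat) (chi y))" using chi_rat[OF assms] by simp
  also have "\<dots> = map_poly (of_int :: int \<Rightarrow> complex) (chi y)"
    by (rule poly_eqI) (simp add: coeff_map_poly)
  finally show ?thesis by simp
qed

lemma chi_root: assumes "y \<in> OK" shows "poly (map_poly (of_int :: int \<Rightarrow> complex) (chi y)) y = 0"
proof -
  have y: "y \<in> K" using assms OK_K by blast
  have "eigenvector (map_mat (of_rat :: rat \<Rightarrow> complex) (Amat y)) wv y"
    unfolding eigenvector_def using Amat_eigen[OF y] wv_carrier wv_nz by simp
  hence "eigenvalue (map_mat (of_rat :: rat \<Rightarrow> complex) (Amat y)) y" unfolding eigenvalue_def by blast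
  hence "poly (char_poly (map_mat (of_rat :: rat \<Rightarrow> complex) (Amat y))) y = 0"
    by (simp add: eigenvalue_root_char_poly[of _ dK])
  thus ?thesis using chi_complex[OF assms] by simp
qed

lemma det_uminus_mat: assumes "A \<in> carrier_mat n n" shows "det (- A) = (-1) ^ n * (det A :: 'a :: comm_ring_1)"
proof -
  have "- A = (-1) \<cdot>\<^sub>m A" using assms by (intro eq_matI) auto
  thus ?thesis using assms by simp
qed

lemma chi_coeff0: assumes "y \<in> OK" shows "of_int (coeff (chi y) 0) = (-1) ^ dK * Nm y"
proof -
  have "of_int (coeff (chi y) 0) = coeff (map_poly (of_int :: int \<Rightarrow> rat) (chi y)) 0"
    by (simp add: coeff_map_poly)
  also have "\<dots> = poly (char_poly (Amat y)) 0" using chi_rat[OF assms] by (simp add: poly_0_coeff_0)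
  also have "\<dots> = det (- (char_matrix (Amat y) 0))" by (rule char_poly_matrix[OF Amat_carrier])
  also have "char_matrix (Amat y) 0 = Amat y" unfolding char_matrix_def by (intro eq_matI) auto
  also have "det (- Amat y) = (-1) ^ dK * Nm y" unfolding Nm_def by (rule det_uminus_mat[OF Amat_carrier])
  finally show ?thesis .
qed

lemma Nm_Ints: assumes "y \<in> OK" shows "Nm y \<in> \<int>"
proof -
  have "(-1) ^ dK * Nm y \<in> \<int>" using chi_coeff0[OF assms] by (metis Ints_of_int)
  show ?thesis
  proof (cases "even dK")
    case True thus ?thesis using \<open>(-1) ^ dK * Nm y \<in> \<int>\<close> by simp
  next
    case False
    hence "- Nm y \<in> \<int>" using \<open>(-1) ^ dK * Nm y \<in> \<int>\<close> by simp
    hence "- (- Nm y) \<in> \<int>" by (rule Ints_minus)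
    thus ?thesis by simp
  qed
qed

lemma OK_divides_int: assumes "c \<in> OK" "c \<noteq> 0"
  shows "\<exists>m::int. m > 0 \<and> of_int m / c \<in> OK"
proof -
  have cK: "c \<in> K" using assms OK_K by blast
  obtain a0 q where chq: "chi c = pCons a0 q" by (cases "chi c") auto
  have a0: "a0 = coeff (chi c) 0" using chq by simp
  have "of_int a0 = (-1) ^ dK * Nm c" using chi_coeff0[OF assms(1)] a0 by simp
  hence a0nz: "a0 \<noteq> 0" using Nm_nz[OF cK assms(2)] by auto
  have "map_poly (of_int :: int \<Rightarrow> complex) (chi c) = pCons (of_int a0) (map_poly of_int q)"
    unfolding chq by (rule poly_eqI) (simp add: coeff_map_poly coeff_pCons split: nat.split)
  hence "0 = of_int a0 + c * poly (map_poly (of_int :: int \<Rightarrow> complex) q) c"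
    using chi_root[OF assms(1)] by simp
  hence e: "of_int a0 / c = - poly (map_poly (of_int :: int \<Rightarrow> complex) q) c"
    using assms(2) by (simp add: field_simps eq_neg_iff_add_eq_0 add.commute)
  have Q: "poly (map_poly (of_int :: int \<Rightarrow> complex) q) c \<in> OK" by (rule OK_int_poly[OF assms(1)])
  show ?thesis
  proof (cases "a0 > 0")
    case True
    thus ?thesis using e Q OK_uminus by (intro exI[of _ a0]) auto
  next
    case False
    hence "- a0 > 0" using a0nz by simp
    moreover have "of_int (- a0) / c = poly (map_poly (of_int :: int \<Rightarrow> complex) q) c"
      using e by (simp add: minus_divide_left[symmetric])
    ultimately show ?thesis using Q by (intro exI[of _ "- a0"]) auto
  qed
qed

end


context nfield
begin

definition qcong :: "int \<Rightarrow> complex \<Rightarrow> complex \<Rightarrow> bool" where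
  "qcong q a b \<longleftrightarrow> (a - b) / of_int q \<in> OK"

lemma qcong_refl: "qcong q a a"
  unfolding qcong_def using OK_0 by simp

lemma qcong_sym: "qcong q a b \<Longrightarrow> qcong q b a"
  unfolding qcong_def using OK_uminus by (metis minus_diff_eq minus_divide_left)

lemma qcong_trans: "qcong q a b \<Longrightarrow> qcong q b c \<Longrightarrow> qcong q a c"
  unfolding qcong_def using OK_add by (metis add_divide_distrib diff_add_cancel add_diff_eq)

lemma qcong_mult: "qcong q a b \<Longrightarrow> c \<in> OK \<Longrightarrow> qcong q (c * a) (c * b)"
  unfolding qcong_def using OK_mult
  by (metis right_diff_distrib times_divide_eq_right)

lemma qcong_reduce:
  assumes q: "q > 0" and y: "y \<in> OK"
  shows "qcong q (\<Sum>i<n. of_int (d i) * y ^ i) (\<Sum>i<n. of_int (d i mod q) * y ^ i)"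
proof -
  have "(\<Sum>i<n. of_int (d i) * y ^ i) - (\<Sum>i<n. of_int (d i mod q) * y ^ i) =
        (\<Sum>i<n. of_int (d i - d i mod q) * y ^ i)"
    by (simp add: sum_subtractf algebra_simps)
  also have "\<dots> = of_int q * (\<Sum>i<n. of_int (d i div q) * y ^ i)"
    unfolding minus_mod_eq_mult_div by (simp add: sum_distrib_left mult.assoc)
  finally have "((\<Sum>i<n. of_int (d i) * y ^ i) - (\<Sum>i<n. of_int (d i mod q) * y ^ i)) / of_int q =
     (\<Sum>i<n. of_int (d i div q) * y ^ i)" using q by simp
  moreover have "(\<Sum>i<n. of_int (d i div q) * y ^ i) \<in> OK"
    by (intro OK_sum OK_mult OK_of_int OK_power y)
  ultimately show ?thesis unfolding qcong_def by simp
qed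

lemma power_rep:
  assumes q: "q > 0" and y: "y \<in> OK"
  shows "\<exists>c. (\<forall>i. 0 \<le> c i \<and> c i < q) \<and> qcong q (y ^ k) (\<Sum>i<dK. of_int (c i) * y ^ i)"
proof (induction k)
  case 0
  define d where "d = (\<lambda>i::nat. if i = 0 then (1::int) else 0)"
  have "(\<Sum>i<dK. of_int (d i) * y ^ i) = (\<Sum>i<dK. if i = 0 then 1 else (0::complex))"
    unfolding d_def by (intro sum.cong) auto
  also have "\<dots> = 1" using dK_pos by simp
  finally have "qcong q (y ^ 0) (\<Sum>i<dK. of_int (d i) * y ^ i)" using qcong_refl by simp
  hence "qcong q (y ^ 0) (\<Sum>i<dK. of_int (d i mod q) * y ^ i)"
    using qcong_trans qcong_reduce[OF q y] by blast
  thus ?case using q by (intro exI[of _ "\<lambda>i. d i mod q"]) auto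
next
  case (Suc k)
  then obtain c where c: "\<forall>i. 0 \<le> c i \<and> c i < q" "qcong q (y ^ k) (\<Sum>i<dK. of_int (c i) * y ^ i)"
    by blast
  obtain m where m: "dK = Suc m" using dK_pos by (cases dK) auto
  define ch where "ch = chi y"
  have top: "y ^ dK = (\<Sum>l<dK. of_int (- coeff ch l) * y ^ l)"
    using monic_top_power[OF chi_monic(1)[OF y] chi_root[OF y]] chi_monic(2)[OF y] unfolding ch_def
    by simp
  define d where "d = (\<lambda>i. (if i = 0 then 0 else c (i - 1)) + c m * (- coeff ch i))"
  have "y * (\<Sum>i<dK. of_int (c i) * y ^ i) = (\<Sum>i<dK. of_int (c i) * y ^ Suc i)"
    by (simp add: sum_distrib_left mult_ac)
  also have "\<dots> = (\<Sum>i<m. of_int (c i) * y ^ Suc i) + of_int (c m) * y ^ dK"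
    unfolding m by simp
  also have "(\<Sum>i<m. of_int (c i) * y ^ Suc i) = (\<Sum>i<dK. of_int (if i = 0 then 0 else c (i - 1)) * y ^ i)"
    unfolding m sum.lessThan_Suc_shift by simp
  also have "of_int (c m) * y ^ dK = (\<Sum>i<dK. of_int (c m * (- coeff ch i)) * y ^ i)"
    unfolding top by (simp add: sum_distrib_left mult_ac)
  also have "(\<Sum>i<dK. of_int (if i = 0 then 0 else c (i - 1)) * y ^ i) +
             (\<Sum>i<dK. of_int (c m * (- coeff ch i)) * y ^ i) = (\<Sum>i<dK. of_int (d i) * y ^ i)"
    unfolding d_def sum.distrib[symmetric] by (intro sum.cong refl) (simp add: algebra_simps)
  finally have e: "y * (\<Sum>i<dK. of_int (c i) * y ^ i) = (\<Sum>i<dK. of_int (d i) * y ^ i)" .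
  have "qcong q (y ^ Suc k) (y * (\<Sum>i<dK. of_int (c i) * y ^ i))"
    using qcong_mult[OF c(2) y] by simp
  hence "qcong q (y ^ Suc k) (\<Sum>i<dK. of_int (d i mod q) * y ^ i)"
    unfolding e using qcong_trans qcong_reduce[OF q y] by blast
  thus ?case using q by (intro exI[of _ "\<lambda>i. d i mod q"]) auto
qed

lemma uniform_power:
  assumes q: "q > (0::int)"
  shows "\<exists>s L. L > 0 \<and> (\<forall>y\<in>OK. qcong q (y ^ (s + L)) (y ^ s))"
proof -
  define s where "s = nat q ^ dK"
  define L :: nat where "L = fact s"
  have "qcong q (y ^ (s + L)) (y ^ s)" if y: "y \<in> OK" for y
  proof -
    have "\<forall>k. \<exists>c. (\<forall>i. 0 \<le> c i \<and> c i < q) \<and> qcong q (y ^ k) (\<Sum>i<dK. of_int (c i) * y ^ i)"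
      using power_rep[OF q y] by blast
    then obtain C where C: "\<And>k. (\<forall>i. 0 \<le> C k i \<and> C k i < q)"
      "\<And>k. qcong q (y ^ k) (\<Sum>i<dK. of_int (C k i) * y ^ i)"
      by metis
    define f where "f k = map (C k) [0..<dK]" for k
    define Ls where "Ls = {xs. set xs \<subseteq> {0..<q} \<and> length xs = dK}"
    have finLs: "finite Ls" unfolding Ls_def by (rule finite_lists_length_eq) simp
    have cardLs: "card Ls = s" unfolding Ls_def s_def by (simp add: card_lists_length_eq)
    have sub: "f ` {0..s} \<subseteq> Ls" unfolding Ls_def f_def using C(1) by auto
    have "card (f ` {0..s}) \<le> s" using card_mono[OF finLs sub] cardLs by simp
    hence "card {0..s} > card (f ` {0..s})" by simp
    hence "\<not> inj_on f {0..s}" by (rule pigeonhole)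
    then obtain i j where ij: "i \<in> {0..s}" "j \<in> {0..s}" "i \<noteq> j" "f i = f j"
      unfolding inj_on_def by blast
    have congij: "qcong q (y ^ a) (y ^ b)" if "f a = f b" for a b
    proof -
      have "\<forall>l<dK. C a l = C b l"
        using that unfolding f_def by (metis (no_types, lifting) diff_zero length_upt map_eq_conv nth_map_upt add_0)
      hence "(\<Sum>l<dK. of_int (C a l) * y ^ l) = (\<Sum>l<dK. of_int (C b l) * y ^ l)" by simp
      thus ?thesis using C(2)[of a] C(2)[of b] qcong_trans qcong_sym by metis
    qed
    obtain i j where ij': "i < j" "j \<le> s" "qcong q (y ^ i) (y ^ j)"
    proof (cases "i < j")
      case True thus ?thesis using that ij congij by auto
    next
      case False thus ?thesis using that[of j i] ij congij by auto
    qed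
    define e where "e = j - i"
    have e: "e > 0" "e \<le> s" "j = i + e" using ij' unfolding e_def by auto
    have step: "qcong q (y ^ (s + t * e)) (y ^ (s + Suc t * e))" for t
    proof -
      have "qcong q (y ^ (s - i + t * e) * y ^ i) (y ^ (s - i + t * e) * y ^ j)"
        by (rule qcong_mult[OF ij'(3) OK_power[OF y]])
      moreover have "y ^ (s - i + t * e) * y ^ i = y ^ (s + t * e)"
        using ij' by (simp flip: power_add)
      moreover have "y ^ (s - i + t * e) * y ^ j = y ^ (s + Suc t * e)"
        using ij' e by (simp add: add_ac flip: power_add)
      ultimately show ?thesis by simp
    qed
    have all: "qcong q (y ^ s) (y ^ (s + t * e))" for t
    proof (induction t)
      case 0 show ?case using qcong_refl by simp
    next
      case (Suc t) thus ?case using step[of t] qcong_trans by blast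
    qed
    have "e dvd L" unfolding L_def using e by (intro dvd_fact) auto
    then obtain t where "L = e * t" by blast
    hence "qcong q (y ^ s) (y ^ (s + L))" using all[of t] by (simp add: mult.commute)
    thus ?thesis by (rule qcong_sym)
  qed
  moreover have "L > 0" unfolding L_def by simp
  ultimately show ?thesis by blast
qed

end


lemma poly_zero_if_infinite_roots:
  fixes P :: "rat poly"
  assumes "infinite S" "\<And>x. x \<in> S \<Longrightarrow> poly P x = 0"
  shows "P = 0"
proof (rule ccontr)
  assume "P \<noteq> 0"
  hence "finite {x. poly P x = 0}" by (rule poly_roots_finite)
  moreover have "S \<subseteq> {x. poly P x = 0}" using assms(2) by auto
  ultimately show False using assms(1) finite_subset by blast
qed

lemma int_unit_sq: assumes "(a::rat) \<in> \<int>" "b \<in> \<int>" "a * b = 1" shows "a ^ 2 = 1"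
proof -
  obtain x y :: int where xy: "a = of_int x" "b = of_int y" using assms(1,2) by (auto elim!: Ints_cases)
  hence "x * y = 1" using assms(3) by (metis of_int_1 of_int_eq_iff of_int_mult)
  hence "x = 1 \<or> x = -1" using zmult_eq_1_iff by blast
  thus ?thesis using xy by auto
qed

context nfield
begin

lemma Nm_polyfun:
  assumes h: "\<forall>i. coeff h i \<in> K"
  shows "\<exists>\<Phi> :: rat poly. \<forall>t. poly \<Phi> t = Nm (poly h (of_rat t))"
proof -
  define E where "E i j = (\<Sum>l\<le>degree h. monom (coord i (coeff h l * bs ! j)) l)" for i j
  define B where "B = mat dK dK (\<lambda>(j,i). E i j)"
  have "poly (det B) t = Nm (poly h (of_rat t))" for t
    unfolding Nm_def
  proof (rule poly_det_cong[OF Amat_carrier])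
    show "B \<in> carrier_mat dK dK" unfolding B_def by simp
    fix j i assume ji: "j < dK" "i < dK"
    have "poly h (of_rat t) * bs ! j = (\<Sum>l\<le>degree h. (coeff h l * of_rat t ^ l) * bs ! j)"
      by (simp add: poly_altdef sum_distrib_right)
    also have "\<dots> = (\<Sum>l\<le>degree h. of_rat (t ^ l) * (coeff h l * bs ! j))"
      by (intro sum.cong refl) (simp add: of_rat_power mult_ac)
    finally have "poly h (of_rat t) * bs ! j = (\<Sum>l\<le>degree h. of_rat (t ^ l) * (coeff h l * bs ! j))" .
    hence "coord i (poly h (of_rat t) * bs ! j) = coord i (\<Sum>l\<le>degree h. of_rat (t ^ l) * (coeff h l * bs ! j))"
      by simp
    also have "\<dots> = (\<Sum>l\<le>degree h. coord i (of_rat (t ^ l) * (coeff h l * bs ! j)))"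
      by (rule coord_sum) (use ji in \<open>auto intro!: Kmult Kof_rat bs_K h[rule_format]\<close>)
    also have "\<dots> = (\<Sum>l\<le>degree h. t ^ l * coord i (coeff h l * bs ! j))"
      by (intro sum.cong refl coord_scale Kmult h[rule_format] bs_K ji)
    also have "\<dots> = poly (E i j) t" unfolding E_def by (simp add: poly_sum poly_monom mult_ac)
    finally show "poly (B $$ (j, i)) t = Amat (poly h (of_rat t)) $$ (j, i)"
      using ji by (simp add: B_def Amat_index)
  qed
  thus ?thesis by blast
qed

lemma nonunit_value:
  assumes pK: "\<forall>i. coeff p i \<in> K" and pv: "\<forall>x\<in>OK. poly p x \<in> OK" and dp: "degree p > 0"
  shows "\<exists>t::int. poly p (of_int t) = 0 \<or> inverse (poly p (of_int t)) \<notin> OK"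
proof (rule ccontr)
  assume "\<not> ?thesis"
  hence u: "\<And>t::int. poly p (of_int t) \<noteq> 0 \<and> inverse (poly p (of_int t)) \<in> OK" by blast
  obtain \<Phi> where \<Phi>: "\<And>t. poly \<Phi> t = Nm (poly p (of_rat t))" using Nm_polyfun[OF pK] by blast
  have sq: "(Nm (poly p (of_int t))) ^ 2 = 1" for t :: int
  proof -
    have a: "poly p (of_int t) \<in> OK" using pv OK_of_int by blast
    have aK: "poly p (of_int t) \<in> K" using a OK_K by blast
    have "Nm (poly p (of_int t)) * Nm (inverse (poly p (of_int t))) = 1"
      using Nm_mult[OF aK Kinv[OF aK]] u[of t] Nm_one by simp
    thus ?thesis using Nm_Ints[OF a] Nm_Ints u[of t] int_unit_sq by blast
  qed
  have "\<Phi> ^ 2 - 1 = 0"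
  proof (rule poly_zero_if_infinite_roots[of "range of_int"])
    show "infinite (range (of_int :: int \<Rightarrow> rat))"
    proof -
      have "inj (of_int :: int \<Rightarrow> rat)" by (rule injI) simp
      thus ?thesis using infinite_UNIV_char_0[where 'a=int] finite_imageD by blast
    qed
    fix x assume "x \<in> range (of_int :: int \<Rightarrow> rat)"
    then obtain t where t: "x = of_int t" by blast
    show "poly (\<Phi> ^ 2 - 1) x = 0" using sq[of t] unfolding t by (simp add: \<Phi>)
  qed
  hence sqr: "(Nm (poly p (of_rat t))) ^ 2 = 1" for t
  proof -
    have "poly (\<Phi> ^ 2 - 1) t = poly 0 t" using \<open>\<Phi> ^ 2 - 1 = 0\<close> by (rule arg_cong)
    thus ?thesis by (simp add: \<Phi>)
  qed
  define D where "D = degree p"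
  have rK: "\<forall>i. coeff (reflect_poly p) i \<in> K" using pK K0 by (simp add: coeff_reflect_poly)
  obtain \<Psi> where \<Psi>: "\<And>t. poly \<Psi> t = Nm (poly (reflect_poly p) (of_rat t))" using Nm_polyfun[OF rK] by blast
  have "\<Psi> ^ 2 - monom 1 (2 * D * dK) = 0"
  proof (rule poly_zero_if_infinite_roots[of "UNIV - {0}"])
    show "infinite (UNIV - {0::rat})" using infinite_UNIV_char_0[where 'a=rat] by simp
    fix s :: rat assume "s \<in> UNIV - {0}"
    hence s: "s \<noteq> 0" by simp
    have "poly (reflect_poly p) (of_rat s) = of_rat s ^ D * poly p (inverse (of_rat s))"
      unfolding D_def using s by (simp add: poly_reflect_poly_nz)
    also have "\<dots> = of_rat (s ^ D) * poly p (of_rat (inverse s))" by (simp add: of_rat_power of_rat_inverse)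
    finally have "Nm (poly (reflect_poly p) (of_rat s)) = (s ^ D) ^ dK * Nm (poly p (of_rat (inverse s)))"
      using Nm_scale Kpoly[OF pK Kof_rat] by simp
    hence "(poly \<Psi> s) ^ 2 = ((s ^ D) ^ dK) ^ 2 * (Nm (poly p (of_rat (inverse s)))) ^ 2"
      by (simp add: \<Psi> power_mult_distrib)
    also have "\<dots> = s ^ (2 * D * dK)" using sqr by (simp flip: power_mult add: mult_ac)
    finally show "poly (\<Psi> ^ 2 - monom 1 (2 * D * dK)) s = 0" by (simp add: poly_monom)
  qed
  hence "poly (\<Psi> ^ 2 - monom 1 (2 * D * dK)) 0 = poly 0 0" by (rule arg_cong)
  hence "(poly \<Psi> 0) ^ 2 = 0 ^ (2 * D * dK)" by (simp add: poly_monom)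
  also have "\<dots> = 0" using dp dK_pos unfolding D_def by simp
  finally have "poly \<Psi> 0 = 0" by simp
  moreover have "poly \<Psi> 0 = Nm (lead_coeff p)"
  proof -
    have "poly \<Psi> 0 = Nm (poly (reflect_poly p) (of_rat 0))" by (rule \<Psi>)
    also have "\<dots> = Nm (lead_coeff p)" by (simp add: poly_0_coeff_0)
    finally show ?thesis .
  qed
  moreover have "lead_coeff p \<noteq> 0" using dp by auto
  ultimately show False using Nm_nz pK by metis
qed

end


context nfield
begin

abbreviation "RR \<equiv> int_valued_polys K"

lemma RR_iff: "f \<in> RR \<longleftrightarrow> (\<forall>i. coeff f i \<in> K) \<and> (\<forall>x\<in>OK. poly f x \<in> OK)"
  unfolding int_valued_polys_def by simp

lemma RR_add: "f \<in> RR \<Longrightarrow> g \<in> RR \<Longrightarrow> f + g \<in> RR"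
  by (simp add: RR_iff Kadd OK_add)

lemma RR_diff: "f \<in> RR \<Longrightarrow> g \<in> RR \<Longrightarrow> f - g \<in> RR"
  by (simp add: RR_iff Kdiff OK_diff)

lemma RR_mult: "f \<in> RR \<Longrightarrow> g \<in> RR \<Longrightarrow> f * g \<in> RR"
  by (simp add: RR_iff coeff_mult Ksum Kmult OK_mult)

lemma RR_const: "c \<in> OK \<Longrightarrow> [:c:] \<in> RR"
  by (simp add: RR_iff coeff_pCons OK_K K0 split: nat.split)

lemma RR_one: "1 \<in> RR"
  using RR_const[OF OK_1] by (simp add: one_pCons)

lemma RR_power: "f \<in> RR \<Longrightarrow> f ^ k \<in> RR"
  by (induction k) (auto intro: RR_mult RR_one)

lemma RR_monom: "monom 1 k \<in> RR"
  by (simp add: RR_iff poly_monom OK_power K0 K1)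

lemma RR_poly_OK: "f \<in> RR \<Longrightarrow> x \<in> OK \<Longrightarrow> poly f x \<in> OK"
  by (simp add: RR_iff)

lemma no_prime_const:
  assumes p: "p \<in> RR" "p \<noteq> 0" "\<not> (\<exists>q\<in>RR. p * q = 1)"
    and pr: "\<forall>a\<in>RR. \<forall>b\<in>RR. (\<exists>c\<in>RR. a * b = p * c) \<longrightarrow> (\<exists>c\<in>RR. a = p * c) \<or> (\<exists>c\<in>RR. b = p * c)"
    and dp: "degree p = 0"
  shows False
proof -
  obtain c where pc: "p = [:c:]" using dp by (rule degree_eq_zeroE)
  have cOK: "c \<in> OK" using RR_poly_OK[OF p(1) OK_0] pc by simp
  have c0: "c \<noteq> 0" using p(2) pc by simp
  have ninv: "inverse c \<notin> OK"
  proof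
    assume "inverse c \<in> OK"
    hence "[:inverse c:] \<in> RR" by (rule RR_const)
    moreover have "p * [:inverse c:] = 1" using c0 pc by (simp add: one_pCons)
    ultimately show False using p(3) by blast
  qed
  have nodiv: "\<not> (\<exists>g\<in>RR. poly (p * g) z = 1)" if "z \<in> OK" for z
  proof
    assume "\<exists>g\<in>RR. poly (p * g) z = 1"
    then obtain g where g: "g \<in> RR" "c * poly g z = 1" using pc by auto
    hence "inverse c = poly g z" using c0 by (simp add: field_simps)
    thus False using ninv RR_poly_OK[OF g(1) that] by simp
  qed
  obtain m :: int where m: "m > 0" "of_int m / c \<in> OK" using OK_divides_int[OF cOK c0] by blast
  obtain s L where sL: "L > 0" "\<forall>y\<in>OK. qcong m (y ^ (s + L)) (y ^ s)"
    using uniform_power[OF m(1)] by blast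
  define D where "D = monom (1::complex) (s + L) - monom 1 s"
  define F where "F = Polynomial.smult (1 / of_int m) D"
  have FR: "F \<in> RR"
    unfolding RR_iff
  proof (intro conjI ballI allI)
    fix i show "coeff F i \<in> K" unfolding F_def D_def by (simp add: Kmult Kdiff K0 K1 Kof_int Kdiv)
  next
    fix x assume x: "x \<in> OK"
    have "poly F x = (x ^ (s + L) - x ^ s) / of_int m" unfolding F_def D_def by (simp add: poly_monom)
    thus "poly F x \<in> OK" using sL(2) x unfolding qcong_def by simp
  qed
  define G where "G = [:of_int m / c:] * F"
  have GR: "G \<in> RR" unfolding G_def by (intro RR_mult RR_const m(2) FR)
  have "monom 1 s * (monom 1 L - 1) = p * G"
  proof -
    have "monom 1 s * (monom 1 L - 1) = D" unfolding D_def by (simp add: algebra_simps mult_monom)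
    also have "D = p * G" unfolding G_def F_def pc using c0 m(1) by (simp add: smult_smult)
    finally show ?thesis .
  qed
  moreover have "monom 1 L - 1 \<in> RR" using RR_diff[OF RR_monom RR_one] .
  ultimately have "(\<exists>g\<in>RR. monom 1 s = p * g) \<or> (\<exists>g\<in>RR. monom 1 L - 1 = p * g)"
    using pr RR_monom GR by blast
  moreover have "\<not> (\<exists>g\<in>RR. monom 1 L - 1 = p * g)"
  proof
    assume "\<exists>g\<in>RR. monom 1 L - 1 = p * g"
    then obtain g where g: "g \<in> RR" "monom 1 L - 1 = p * g" by blast
    hence "poly (p * Polynomial.smult (-1) g) 0 = 1" using sL(1) by (simp add: poly_monom flip: g(2))
    moreover have "Polynomial.smult (-1) g \<in> RR" using RR_mult[OF RR_const[OF OK_uminus[OF OK_1]] g(1)] by simp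
    ultimately show False using nodiv[OF OK_0] by blast
  qed
  moreover have "\<not> (\<exists>g\<in>RR. monom 1 k = p * g)" for k
  proof (induction k)
    case 0
    show ?case
    proof
      assume "\<exists>g\<in>RR. monom 1 0 = p * g"
      then obtain g where "g \<in> RR" "poly (p * g) 0 = 1" by (metis one_pCons poly_1 monom_eq_1)
      thus False using nodiv[OF OK_0] by blast
    qed
  next
    case (Suc k)
    show ?case
    proof
      assume "\<exists>g\<in>RR. monom 1 (Suc k) = p * g"
      then obtain g where g: "g \<in> RR" "monom 1 (Suc k) = p * g" by blast
      have "monom 1 1 * monom 1 k = p * g" using g(2) by (simp add: mult_monom)
      hence "(\<exists>g\<in>RR. monom 1 1 = p * g) \<or> (\<exists>g\<in>RR. monom 1 k = p * g)"
        using pr RR_monom g(1) by blast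
      moreover have "\<not> (\<exists>g\<in>RR. monom 1 1 = p * g)"
      proof
        assume "\<exists>g\<in>RR. monom 1 1 = p * g"
        then obtain g' where "g' \<in> RR" "monom 1 1 = p * g'" by blast
        hence "poly (p * g') 1 = 1" by (metis poly_monom mult_1 power_one)
        thus False using nodiv[OF OK_1] \<open>g' \<in> RR\<close> by blast
      qed
      ultimately show False using Suc.IH by blast
    qed
  qed
  ultimately show False by blast
qed

lemma no_prime_nonconst:
  assumes p: "p \<in> RR" "p \<noteq> 0"
    and pr: "\<forall>a\<in>RR. \<forall>b\<in>RR. (\<exists>c\<in>RR. a * b = p * c) \<longrightarrow> (\<exists>c\<in>RR. a = p * c) \<or> (\<exists>c\<in>RR. b = p * c)"
    and dp: "degree p > 0"
  shows False
proof -
  have cancel: "V \<in> RR" if VK: "\<forall>i. coeff V i \<in> K" and d: "d \<noteq> 0" "Polynomial.smult (of_int d) V \<in> RR" and pV: "p * V \<in> RR"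
    for V :: "complex poly" and d :: int
  proof -
    have dR: "[:of_int d:] \<in> RR" by (rule RR_const[OF OK_of_int])
    have "[:of_int d:] * (p * V) = p * Polynomial.smult (of_int d) V" by (simp add: mult_ac)
    hence "(\<exists>g\<in>RR. [:of_int d:] = p * g) \<or> (\<exists>g\<in>RR. p * V = p * g)"
      using pr dR pV d(2) by blast
    moreover have "\<not> (\<exists>g\<in>RR. [:of_int d:] = p * g)"
    proof
      assume "\<exists>g\<in>RR. [:of_int d:] = p * g"
      then obtain g where g: "[:of_int d:] = p * g" by blast
      hence "g \<noteq> 0" using d(1) by auto
      hence "degree (p * g) = degree p + degree g" using p(2) by (simp add: degree_mult_eq)
      moreover have "degree (p * g) = 0" unfolding g[symmetric] by simp
      ultimately show False using dp by simp
    qed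
    ultimately obtain g where "g \<in> RR" "p * V = p * g" by blast
    thus ?thesis using p(2) by simp
  qed
  have pK: "\<forall>i. coeff p i \<in> K" and pv: "\<forall>x\<in>OK. poly p x \<in> OK" using p(1) by (simp_all add: RR_iff)
  obtain t :: int where t: "poly p (of_int t) = 0 \<or> inverse (poly p (of_int t)) \<notin> OK"
    using nonunit_value[OF pK pv dp] by blast
  define y0 where "y0 = poly p (of_int t)"
  have y0: "y0 \<in> OK" unfolding y0_def using pv OK_of_int by blast
  obtain m :: int where m: "m > 0" "\<not> (\<exists>u\<in>OK. (1 - y0 * u) / of_int m \<in> OK)"
  proof (cases "y0 = 0")
    case True
    hence "\<not> (\<exists>u\<in>OK. (1 - y0 * u) / of_int 2 \<in> OK)" using half_not_OK by simp
    thus ?thesis using that[of 2] by simp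
  next
    case False
    obtain m :: int where m: "m > 0" "of_int m / y0 \<in> OK" using OK_divides_int[OF y0 False] by blast
    have "\<not> (\<exists>u\<in>OK. (1 - y0 * u) / of_int m \<in> OK)"
    proof
      assume "\<exists>u\<in>OK. (1 - y0 * u) / of_int m \<in> OK"
      then obtain u where u: "u \<in> OK" "(1 - y0 * u) / of_int m \<in> OK" by blast
      define w where "w = (1 - y0 * u) / of_int m"
      have eq: "inverse y0 = u + (of_int m / y0) * w" unfolding w_def using False m(1) by (simp add: field_simps)
      have w: "w \<in> OK" using u(2) unfolding w_def .
      have "u + (of_int m / y0) * w \<in> OK" by (intro OK_add OK_mult u(1) m(2) w)
      hence "inverse y0 \<in> OK" by (subst eq)
      thus False using t False unfolding y0_def by blast
    qed
    thus ?thesis using that m(1) by blast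
  qed
  obtain s L where sL: "L > 0" "\<forall>y\<in>OK. qcong m (y ^ (s + L)) (y ^ s)"
    using uniform_power[OF m(1)] by blast
  define V where "V j = Polynomial.smult (1 / of_int m) (p ^ j * (p ^ L - 1))" for j
  have VK: "\<forall>i. coeff (V j) i \<in> K" for j
  proof -
    have "p ^ j * (p ^ L - 1) \<in> RR" by (intro RR_mult RR_power RR_diff RR_one p(1))
    thus ?thesis unfolding V_def by (simp add: RR_iff Kmult Kdiv K1 Kof_int)
  qed
  have "k \<le> s \<longrightarrow> V (s - k) \<in> RR" for k
  proof (induction k)
    case 0
    show ?case unfolding RR_iff
    proof (intro impI conjI ballI)
      show "\<forall>i. coeff (V (s - 0)) i \<in> K" by (rule VK)
      fix x assume x: "x \<in> OK"
      define y where "y = poly p x"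
      have y: "y \<in> OK" unfolding y_def using pv x by blast
      have e1: "poly (V (s - 0)) x = (1 / of_int m) * (y ^ s * (y ^ L - 1))" unfolding V_def y_def by simp
      have e2: "y ^ s * (y ^ L - 1) = y ^ (s + L) - y ^ s" by (simp add: power_add algebra_simps)
      have "poly (V (s - 0)) x = (y ^ (s + L) - y ^ s) / of_int m" unfolding e1 e2 by simp
      thus "poly (V (s - 0)) x \<in> OK" using sL(2) y unfolding qcong_def by simp
    qed
  next
    case (Suc k)
    show ?case
    proof
      assume k: "Suc k \<le> s"
      have e: "s - k = Suc (s - Suc k)" using k by simp
      have "p * V (s - Suc k) = V (s - k)" unfolding V_def e by (simp add: mult_ac)
      hence pV: "p * V (s - Suc k) \<in> RR" using Suc.IH k by simp
      have "Polynomial.smult (of_int m) (V (s - Suc k)) = p ^ (s - Suc k) * (p ^ L - 1)"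
        unfolding V_def using m(1) by simp
      moreover have "p ^ (s - Suc k) * (p ^ L - 1) \<in> RR" by (intro RR_mult RR_power RR_diff RR_one p(1))
      ultimately show "V (s - Suc k) \<in> RR" using cancel[OF VK _ _ pV, of m] m(1) by simp
    qed
  qed
  hence "V (s - s) \<in> RR" by blast
  hence "V 0 \<in> RR" by simp
  hence "poly (V 0) (of_int t) \<in> OK" using RR_poly_OK OK_of_int by blast
  hence "(y0 ^ L - 1) / of_int m \<in> OK" unfolding V_def y0_def by simp
  hence "- ((y0 ^ L - 1) / of_int m) \<in> OK" by (rule OK_uminus)
  moreover have "y0 ^ L = y0 * y0 ^ (L - 1)" using sL(1) by (cases L) simp_all
  ultimately have "(1 - y0 * y0 ^ (L - 1)) / of_int m \<in> OK" by (simp add: minus_divide_left)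
  thus False using m(2) OK_power[OF y0] by blast
qed

lemma no_prime: "\<not> (\<exists>p. prime_elem_in RR p)"
proof
  assume "\<exists>p. prime_elem_in RR p"
  then obtain p where p: "p \<in> RR" "p \<noteq> 0" "\<not> (\<exists>q\<in>RR. p * q = 1)"
    and pr: "\<forall>a\<in>RR. \<forall>b\<in>RR. (\<exists>c\<in>RR. a * b = p * c) \<longrightarrow> (\<exists>c\<in>RR. a = p * c) \<or> (\<exists>c\<in>RR. b = p * c)"
    unfolding prime_elem_in_def by blast
  show False
  proof (cases "degree p = 0")
    case True thus False using no_prime_const[OF p pr] by blast
  next
    case False thus False using no_prime_nonconst[OF p(1,2) pr] by blast
  qed
qed

end

theorem mainTheorem3:
  fixes K :: "complex set"
  assumes "number_field K"
  shows "\<not> (\<exists>p. prime_elem_in (int_valued_polys K) p)"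
proof -
  interpret nfield K by unfold_locales (rule assms)
  show ?thesis by (rule no_prime)
qed


end
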